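(* Let $\pi$ be a signed permutation with $n$ elements and let $H_\pi$ be its circle graph. Then $d_r(\pi) \geq r(A(H_\pi))$, where $r$ denotes rank over $GF(2)$.
   Context: A signed permutation with $n$ elements is a sequence $\pi=(\pi_1,\dots,\pi_n)$ of nonzero integers with $\{|\pi_1|,\dots,|\pi_n|\}=\{1,\dots,n\}$. A reversal replaces a contiguous block $(\pi_i,\pi_{i+1},\dots,\pi_j)$ by $(-\pi_j,\dots,-\pi_{i+1},-\pi_i)$. The reversal distance $d_r(\pi)$ is the minimum number of reversals transforming $\pi$ into the identity $(1,2,\dots,n)$. Construction of $H_\pi$. Arrange cyclically the segments $I_1,\pi_1,I_2,\pi_2,\dots,I_n,\pi_n,I_{n+1},\$$ (and back to $I_1$); the $I_k$ are intermediate segments and $\$$ is an anchor. Endpoint labels: a segment $i>0$ has left endpoint $v_{i-1}$ and right endpoint $v_i$; a segment $-i$ has left endpoint $v_i$ and right endpoint $v_{i-1}$; $\$$ has left endpoint $v_n$ and right endpoint $v_0$; each $I_k$ has as left endpoint the label of the right endpoint of the preceding segment and as right endpoint the label of the left endpoint of the following segment. $G_\pi$ is the 4-regular multigraph on $\{v_0,\dots,v_n\}$ with one edge per segment joining its endpoint labels. A circuit partition (set of closed walks using every edge exactly once in total) determines at each vertex a route (pairing of the four half-edges). $P_A$ is the single Eulerian circuit following the cyclic order of segments; $P_B$ is the circuit partition whose route at each vertex pairs the two non-intermediate half-edges together and the two intermediate half-edges together. A vertex $v$ is oriented if changing the route of $P_A$ at $v$ to that of $P_B$ at $v$ yields a single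 circuit. $H_\pi$ is the graph (loops allowed) on $\{v_0,\dots,v_n\}$ where distinct $u,w$ are adjacent iff their two occurrences interlace in the cyclic vertex sequence of the Eulerian circuit $P_A$, and $v$ is looped iff $v$ is oriented. $A(H)$ is the adjacency matrix over $GF(2)$, with diagonal entry $1$ exactly at looped vertices. *)

theory Defs
  imports "HOL-Library.Z2" "Jordan_Normal_Form.DL_Rank"
begin

definition signed_perm :: "nat \<Rightarrow> int list \<Rightarrow> bool" where
  "signed_perm n p \<longleftrightarrow> length p = n \<and> 0 \<notin> set p \<and>
     (\<lambda>x. nat \<bar>x\<bar>) ` set p = {1..n}"

text \<open>Reversal of the block of positions i..j (0-based, i \<le> j < length p):
  the block is reversed and every element in it is negated.\<close>
definition reversal :: "nat \<Rightarrow> nat \<Rightarrow> int list \<Rightarrow> int list" where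
  "reversal i j p = take i p @ map uminus (rev (drop i (take (Suc j) p))) @ drop (Suc j) p"

definition is_reversal_step :: "int list \<Rightarrow> int list \<Rightarrow> bool" where
  "is_reversal_step p q \<longleftrightarrow> (\<exists>i j. i \<le> j \<and> j < length p \<and> q = reversal i j p)"

definition identity_sp :: "nat \<Rightarrow> int list" where
  "identity_sp n = map int [1..<Suc n]"

definition reversal_distance :: "int list \<Rightarrow> nat" where
  "reversal_distance p =
     (LEAST k. (is_reversal_step ^^ k) p (identity_sp (length p)))"

text \<open>Cyclic segment sequence I_1, pi_1, I_2, pi_2, ..., I_n, pi_n, I_(n+1), dollar is indexed by
  s < 2n+2: s = 2k is I_(k+1) (intermediate), s = 2k+1 < 2n+1 is pi_(k+1), s = 2n+1 is the anchor.
  Vertex v_i is represented by the number i.\<close>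

definition nseg :: "int list \<Rightarrow> nat" where
  "nseg p = 2 * length p + 2"

text \<open>Endpoints of the non-intermediate segments (b = False: left, b = True: right).\<close>
definition nonint_endpt :: "int list \<Rightarrow> nat \<Rightarrow> bool \<Rightarrow> nat" where
  "nonint_endpt p s b =
     (if s = 2 * length p + 1 then (if b then 0 else length p)
      else (let x = p ! (s div 2) in
            if x > 0 then (if b then nat x else nat x - 1)
            else (if b then nat (- x) - 1 else nat (- x))))"

text \<open>Endpoint label of half-edge (s,b) of any segment; an intermediate segment gets as left
  endpoint the right endpoint of the preceding segment (cyclically) and as right endpoint
  the left endpoint of the following segment.\<close>
definition endpt :: "int list \<Rightarrow> nat \<times> bool \<Rightarrow> nat" where
  "endpt p h = (case h of (s, b) \<Rightarrow>
     if odd s then nonint_endpt p s b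
     else if b then nonint_endpt p (s + 1) False
     else nonint_endpt p ((s + nseg p - 1) mod nseg p) True)"

definition intermediate :: "nat \<times> bool \<Rightarrow> bool" where
  "intermediate h \<longleftrightarrow> even (fst h)"

definition half_edges :: "int list \<Rightarrow> (nat \<times> bool) set" where
  "half_edges p = {(s, b). s < nseg p}"

definition edge_rel :: "int list \<Rightarrow> ((nat \<times> bool) \<times> (nat \<times> bool)) set" where
  "edge_rel p = {((s, b), (s, \<not> b)) | s b. s < nseg p}"

text \<open>A route system (transition system): a symmetric pairing of half-edges at each vertex.
  Route of P_A: following the cyclic order of segments.\<close>
definition route_A :: "int list \<Rightarrow> ((nat \<times> bool) \<times> (nat \<times> bool)) set" where
  "route_A p = {(h, h'). h \<in> half_edges p \<and> h' \<in> half_edges p \<and>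
      ((snd h \<and> \<not> snd h' \<and> fst h' = (fst h + 1) mod nseg p) \<or>
       (snd h' \<and> \<not> snd h \<and> fst h = (fst h' + 1) mod nseg p))}"

text \<open>Route of P_B: at each vertex the two non-intermediate half-edges are paired and the two
  intermediate half-edges are paired.\<close>
definition route_B :: "int list \<Rightarrow> ((nat \<times> bool) \<times> (nat \<times> bool)) set" where
  "route_B p = {(h, h'). h \<in> half_edges p \<and> h' \<in> half_edges p \<and> h \<noteq> h' \<and>
      endpt p h = endpt p h' \<and> (intermediate h \<longleftrightarrow> intermediate h')}"

text \<open>The circuit partition determined by a route system consists of the closed walks obtained by
  alternately traversing an edge and following the route; it is a single circuit iff all
  half-edges are connected by these two kinds of steps.\<close>
definition single_circuit :: "int list \<Rightarrow> ((nat \<times> bool) \<times> (nat \<times> bool)) set \<Rightarrow> bool" where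
  "single_circuit p R \<longleftrightarrow>
     (\<forall>h \<in> half_edges p. \<forall>h' \<in> half_edges p. (h, h') \<in> (edge_rel p \<union> R)\<^sup>*)"

definition switch_route :: "int list \<Rightarrow> nat \<Rightarrow> ((nat \<times> bool) \<times> (nat \<times> bool)) set" where
  "switch_route p v = {(h, h') \<in> route_A p. endpt p h \<noteq> v} \<union> {(h, h') \<in> route_B p. endpt p h = v}"

definition oriented :: "int list \<Rightarrow> nat \<Rightarrow> bool" where
  "oriented p v \<longleftrightarrow> single_circuit p (switch_route p v)"

text \<open>Cyclic vertex sequence of the Eulerian circuit P_A: the vertex passed after each segment.\<close>
definition vertex_seq :: "int list \<Rightarrow> nat list" where
  "vertex_seq p = map (\<lambda>s. endpt p (s, True)) [0..<nseg p]"

definition interlace_word :: "'a list \<Rightarrow> 'a \<Rightarrow> 'a \<Rightarrow> bool" where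
  "interlace_word xs u w \<longleftrightarrow>
     (\<exists>i j k l. i < j \<and> j < k \<and> k < l \<and> l < length xs \<and>
        xs ! i = u \<and> xs ! j = w \<and> xs ! k = u \<and> xs ! l = w)"

text \<open>Distinct u, w are adjacent in H_pi iff their occurrences interlace (cyclically).\<close>
definition H_adj :: "int list \<Rightarrow> nat \<Rightarrow> nat \<Rightarrow> bool" where
  "H_adj p u w \<longleftrightarrow> u \<noteq> w \<and>
     (interlace_word (vertex_seq p) u w \<or> interlace_word (vertex_seq p) w u)"

text \<open>Adjacency matrix of H_pi over GF(2) (vertices v_0..v_n), loops on the diagonal.\<close>
definition adj_matrix :: "int list \<Rightarrow> bit mat" where
  "adj_matrix p = mat (Suc (length p)) (Suc (length p))
     (\<lambda>(u, w). if u = w then (if oriented p u then 1 else 0)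
               else (if H_adj p u w then 1 else 0))"

definition rank_GF2 :: "nat \<Rightarrow> bit mat \<Rightarrow> nat" where
  "rank_GF2 m A = vec_space.rank m A"

end

theory Submission
  imports Defs
begin


definition Lv :: "int \<Rightarrow> nat" where "Lv x = (if x > 0 then nat x - 1 else nat (-x))"
definition Rv :: "int \<Rightarrow> nat" where "Rv x = (if x > 0 then nat x else nat (-x) - 1)"

lemma len_vs[simp]: "length (vertex_seq p) = nseg p"
  by (simp add: vertex_seq_def)

lemma vs_nth: assumes "s < nseg p"
  shows "vertex_seq p ! s = endpt p (s, True)"
  using assms by (simp add: vertex_seq_def)

lemma vs_formula: assumes "s < nseg p"
  shows "vertex_seq p ! s = (if s = 2*length p + 1 then 0 else if s = 2*length p then length p
     else if even s then Lv (p!(s div 2)) else Rv (p!(s div 2)))"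
proof -
  have "vertex_seq p ! s = endpt p (s, True)" using vs_nth[OF assms] .
  moreover have "s + 1 < nseg p \<or> s = 2*length p + 1" using assms by (auto simp: nseg_def)
  ultimately show ?thesis
    by (auto simp: endpt_def nonint_endpt_def Lv_def Rv_def Let_def nseg_def elim!: evenE oddE)
qed

lemma mod_pred: assumes "s < (N::nat)" shows "(s + N - 1) mod N = (if s = 0 then N - 1 else s - 1)"
proof (cases "s = 0")
  case True then show ?thesis using assms by simp
next
  case False
  then have e: "s + N - 1 = (s - 1) + N" by simp
  have "(s + N - 1) mod N = ((s - 1) + N) mod N" by (simp only: e)
  also have "\<dots> = (s - 1) mod N" by (rule mod_add_self2)
  also have "\<dots> = s - 1" using assms by simp
  finally show ?thesis using False by simp
qed

lemma mod_suc: assumes "s < (N::nat)" shows "(s + 1) mod N = (if s = N - 1 then 0 else s + 1)"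
  using assms by (auto simp: mod_if)

lemma endpt_False: assumes "s < nseg p"
  shows "endpt p (s, False) = vertex_seq p ! ((s + nseg p - 1) mod nseg p)"
proof -
  define N where "N = nseg p"
  have N: "N = 2 * length p + 2" by (simp add: N_def nseg_def)
  have lt: "(s + N - 1) mod N < N" using N by simp
  show ?thesis
  proof (cases "even s")
    case True
    have m: "(s + N - 1) mod N = (if s = 0 then N - 1 else s - 1)"
      unfolding N_def by (rule mod_pred[OF assms])
    have "odd ((s + N - 1) mod N)" unfolding m using True N by auto
    then show ?thesis using True vs_nth[of "(s + N - 1) mod N" p] lt unfolding N_def
      by (simp add: endpt_def)
  next
    case False
    then obtain k where k: "s = Suc (2*k)" by (metis oddE Suc_eq_plus1)
    have "(s + N - 1) mod N = 2*k" using k mod_pred[OF assms] unfolding N_def by simp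
    moreover have "2*k < N" using k assms N_def by simp
    ultimately show ?thesis using k vs_nth[of "2*k" p] unfolding N_def
      by (simp add: endpt_def)
  qed
qed




definition occ :: "int list \<Rightarrow> nat \<Rightarrow> nat set" where
  "occ p v = {s. s < length (vertex_seq p) \<and> vertex_seq p ! s = v}"

lemma nseg_even: "even (nseg p)" and nseg_ge: "nseg p \<ge> 2"
  by (auto simp: nseg_def)

lemma mod_suc_pred: assumes "s < (N::nat)" shows "((s + 1) mod N + N - 1) mod N = s"
proof (cases "s = N - 1")
  case True
  then have "(s + 1) mod N = 0" using assms by simp
  then show ?thesis using True assms by simp
next
  case False
  then have "(s + 1) mod N = s + 1" using assms by simp
  then show ?thesis using assms by simp
qed

lemma routeA_endpt: assumes "(h, h') \<in> route_A p" shows "endpt p h = endpt p h'"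
proof -
  define N where "N = nseg p"
  have N2: "N \<ge> 2" using nseg_ge N_def by simp
  have key: "endpt p ((s + 1) mod N, False) = endpt p (s, True)" if "s < N" for s
  proof -
    have "((s + 1) mod N + N - 1) mod N = s"
      using that by (rule mod_suc_pred)
    then show ?thesis using endpt_False[of "(s+1) mod N" p] vs_nth[of s p] that N2 unfolding N_def
      by simp
  qed
  from assms show ?thesis unfolding route_A_def half_edges_def N_def[symmetric]
    using key by (cases h; cases h'; auto)
qed

lemma switch_sym: assumes "(h, h') \<in> switch_route p v" shows "(h', h) \<in> switch_route p v"
  using assms routeA_endpt[of h h' p] unfolding switch_route_def
  by (auto simp: route_A_def route_B_def)

lemma E_sym: "sym (edge_rel p \<union> switch_route p v)"
  unfolding sym_def using switch_sym by (auto simp: edge_rel_def)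




lemma oriented_char:
  assumes occv: "occ p v = {c1, c2}" and lt: "c1 < c2"
  shows "oriented p v \<longleftrightarrow> (even c1 \<longleftrightarrow> even c2)"
proof -
  define N where "N = nseg p"
  define E where "E = edge_rel p \<union> switch_route p v"
  have Nev: "even N" and N2: "N \<ge> 2" using nseg_even nseg_ge N_def by auto
  have c2N: "c2 < N" using occv unfolding occ_def N_def by auto
  have vsv: "vertex_seq p ! s = v \<longleftrightarrow> s = c1 \<or> s = c2" if "s < N" for s
    using occv that unfolding occ_def N_def by (auto simp: set_eq_iff)
  have endT: "endpt p (s, True) = vertex_seq p ! s" if "s < N" for s
    using vs_nth[of s p] that N_def by simp
  have endF: "endpt p (s, False) = vertex_seq p ! ((s + N - 1) mod N)" if "s < N" for s
    using endpt_False[of s p] that N_def by simp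
  have e1: "((s, b), (s, \<not> b)) \<in> E" if "s < N" for s b
    using that unfolding E_def edge_rel_def N_def by auto
  have e2: "((s, True), ((s + 1) mod N, False)) \<in> E" if "s < N" "s \<noteq> c1" "s \<noteq> c2" for s
  proof -
    have "((s, True), ((s + 1) mod N, False)) \<in> route_A p"
      using that N2 unfolding route_A_def half_edges_def N_def by auto
    moreover have "endpt p (s, True) \<noteq> v" using endT vsv that by simp
    ultimately show ?thesis unfolding E_def switch_route_def by auto
  qed
  have chain: "((a, x), (b, True)) \<in> E\<^sup>*"
    if "a \<le> b" "b < N" "\<forall>s. a \<le> s \<and> s < b \<longrightarrow> s \<noteq> c1 \<and> s \<noteq> c2" for a b x
    using that
  proof (induction b)
    case 0
    then have "a = 0" by simp
    then show ?case using e1[of 0 False] 0 by (cases x) auto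
  next
    case (Suc b)
    show ?case
    proof (cases "a = Suc b")
      case True
      then show ?thesis using e1[of a False] Suc.prems by (cases x) auto
    next
      case False
      then have ab: "a \<le> b" using Suc.prems by simp
      have 1: "((a, x), (b, True)) \<in> E\<^sup>*" using Suc.IH[OF ab] Suc.prems by auto
      have "(b + 1) mod N = Suc b" using Suc.prems by simp
      then have 2: "((b, True), (Suc b, False)) \<in> E" using e2[of b] Suc.prems ab by auto
      have 3: "((Suc b, False), (Suc b, True)) \<in> E" using e1[of "Suc b" False] Suc.prems by simp
      show ?thesis using 1 2 3 by (meson rtrancl_into_rtrancl)
    qed
  qed
  show ?thesis
  proof (cases "even c1 \<longleftrightarrow> even c2")
    case True
    have e3: "((c2, True), (c1, True)) \<in> E"
    proof -
      have "vertex_seq p ! c1 = v" "vertex_seq p ! c2 = v" using vsv lt c2N by auto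
      then have "((c2, True), (c1, True)) \<in> route_B p"
        using True lt c2N endT unfolding route_B_def half_edges_def intermediate_def N_def
        by auto
      moreover have "endpt p (c2, True) = v" using endT vsv c2N by simp
      ultimately show ?thesis unfolding E_def switch_route_def by auto
    qed
    have toc1: "(h, (c1, True)) \<in> E\<^sup>*" if hh: "h \<in> half_edges p" for h
    proof -
      obtain s x where h: "h = (s, x)" "s < N" using hh unfolding half_edges_def N_def by (cases h) auto
      consider "s \<le> c1" | "c1 < s \<and> s \<le> c2" | "c2 < s" by linarith
      then show ?thesis
      proof cases
        case 1
        then show ?thesis using chain[of s c1 x] h lt c2N by auto
      next
        case 2
        then have "((s, x), (c2, True)) \<in> E\<^sup>*" using chain[of s c2 x] h lt c2N by auto
        then show ?thesis using e3 h by (meson rtrancl_into_rtrancl)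
      next
        case 3
        have a: "((s, x), (N - 1, True)) \<in> E\<^sup>*" using chain[of s "N - 1" x] h 3 lt by auto
        have "(N - 1 + 1) mod N = 0" using N2 by simp
        then have b: "((N - 1, True), (0, False)) \<in> E" using e2[of "N - 1"] 3 h lt N2 by auto
        have c: "((0, False), (c1, True)) \<in> E\<^sup>*" using chain[of 0 c1 False] lt c2N by auto
        show ?thesis using a b c h by (meson rtrancl_into_rtrancl rtrancl_trans)
      qed
    qed
    have "single_circuit p (switch_route p v)"
      unfolding single_circuit_def
    proof (intro ballI)
      fix h h' assume "h \<in> half_edges p" "h' \<in> half_edges p"
      then have "(h, (c1, True)) \<in> E\<^sup>*" "(h', (c1, True)) \<in> E\<^sup>*" using toc1 by auto
      moreover have "sym (E\<^sup>*)" using E_sym sym_rtrancl unfolding E_def by blast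
      ultimately have "(h, (c1, True)) \<in> E\<^sup>*" "((c1, True), h') \<in> E\<^sup>*"
        by (auto dest: symD)
      then show "(h, h') \<in> (edge_rel p \<union> switch_route p v)\<^sup>*" unfolding E_def by simp
    qed
    then show ?thesis using True unfolding oriented_def by simp
  next
    case False
    define X :: "(nat \<times> bool) set" where "X = {(s, b). c1 < s \<and> s \<le> c2}"
    have q: "(h \<in> X \<longleftrightarrow> (even (fst h) \<longleftrightarrow> even (Suc c1)))"
      if hh: "h \<in> half_edges p" and hv: "endpt p h = v" for h
    proof -
      obtain s x where h: "h = (s, x)" "s < N" using hh unfolding half_edges_def N_def by (cases h) auto
      show ?thesis
      proof (cases x)
        case True
        then have "s = c1 \<or> s = c2" using hv h endT vsv by auto
        then show ?thesis using h False lt unfolding X_def by auto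
      next
        case x: False
        have "vertex_seq p ! ((s + N - 1) mod N) = v" using hv h x endF by auto
        moreover have "(s + N - 1) mod N < N" using N2 by simp
        ultimately have "(s + N - 1) mod N = c1 \<or> (s + N - 1) mod N = c2" using vsv by blast
        then have "(s = 0 \<and> N - 1 = c2) \<or> (s \<noteq> 0 \<and> (s = Suc c1 \<or> s = Suc c2))"
          using mod_pred[of s N] h lt c2N by (auto split: if_splits)
        then show ?thesis using h False lt Nev c2N unfolding X_def
          by (auto; presburger)
      qed
    qed
    have stepX: "((s, True) \<in> X \<longleftrightarrow> ((s + 1) mod N, False) \<in> X)"
      if "s < N" "s \<noteq> c1" "s \<noteq> c2" for s
      using that mod_suc[of s N] lt c2N unfolding X_def by auto
    have inv: "(h \<in> X \<longleftrightarrow> h' \<in> X)" if hE: "(h, h') \<in> E" for h h'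
    proof -
      consider "(h, h') \<in> edge_rel p" | "(h, h') \<in> route_A p" "endpt p h \<noteq> v"
        | "(h, h') \<in> route_B p" "endpt p h = v"
        using hE unfolding E_def switch_route_def by auto
      then show ?thesis
      proof cases
        case 1 then show ?thesis unfolding edge_rel_def X_def by auto
      next
        case 2
        have en: "endpt p h = endpt p h'" using routeA_endpt[OF 2(1)] .
        from 2(1) obtain s where s: "s < N" "(h = (s, True) \<and> h' = ((s + 1) mod N, False)) \<or>
            (h' = (s, True) \<and> h = ((s + 1) mod N, False))"
          unfolding route_A_def half_edges_def N_def by (cases h; cases h'; auto)
        then have "vertex_seq p ! s \<noteq> v" using 2(2) en endT by auto
        then have "s \<noteq> c1" "s \<noteq> c2" using vsv s by auto
        then show ?thesis using stepX[of s] s by auto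
      next
        case 3
        then have "h \<in> half_edges p" "h' \<in> half_edges p" "endpt p h' = v"
          "intermediate h \<longleftrightarrow> intermediate h'"
          unfolding route_B_def by auto
        then show ?thesis using q[of h] q[of h'] 3 unfolding intermediate_def by auto
      qed
    qed
    have reach: "h' \<in> X" if "(h, h') \<in> E\<^sup>*" "h \<in> X" for h h'
      using that
    proof (induction rule: rtrancl_induct)
      case base then show ?case .
    next
      case (step y z) then show ?case using inv by blast
    qed
    have "(Suc c1, False) \<in> half_edges p" "(c1, True) \<in> half_edges p"
      using lt c2N unfolding half_edges_def N_def by auto
    moreover have "(Suc c1, False) \<in> X" "(c1, True) \<notin> X" using lt unfolding X_def by auto
    ultimately have "\<not> single_circuit p (switch_route p v)"
      unfolding single_circuit_def using reach unfolding E_def by blast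
    then show ?thesis using False unfolding oriented_def by simp
  qed
qed




definition betw :: "nat \<Rightarrow> nat \<Rightarrow> nat \<Rightarrow> bool" where
  "betw x y z \<longleftrightarrow> (x < z \<and> z < y) \<or> (y < z \<and> z < x)"
definition ilv :: "nat \<Rightarrow> nat \<Rightarrow> nat \<Rightarrow> nat \<Rightarrow> bool" where
  "ilv a1 a2 b1 b2 \<longleftrightarrow> (betw a1 a2 b1 \<noteq> betw a1 a2 b2)"
definition fr :: "nat \<Rightarrow> nat \<Rightarrow> nat \<Rightarrow> nat" where
  "fr l r k = (if l \<le> k \<and> k \<le> r then l + r - k else k)"

lemma bc_iii: fixes x y z l r X Y Z :: nat assumes "x \<noteq> y" "x \<noteq> z" "y \<noteq> z" "l \<le> x" "x \<le> r" "X + x = l + r" "l \<le> y" "y \<le> r" "Y + y = l + r" "l \<le> z" "z \<le> r" "Z + z = l + r"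
 shows "((X < Z \<and> Z < Y) \<or> (Y < Z \<and> Z < X)) \<longleftrightarrow> ((x < z \<and> z < y) \<or> (y < z \<and> z < x))"
  using assms by arith

lemma bc_iio: fixes x y z l r X Y Z :: nat assumes "x \<noteq> y" "x \<noteq> z" "y \<noteq> z" "l \<le> x" "x \<le> r" "X + x = l + r" "l \<le> y" "y \<le> r" "Y + y = l + r" "\<not> (l \<le> z \<and> z \<le> r)" "Z = z"
 shows "((X < Z \<and> Z < Y) \<or> (Y < Z \<and> Z < X)) \<longleftrightarrow> ((x < z \<and> z < y) \<or> (y < z \<and> z < x))"
  using assms by arith

lemma bc_ioi: fixes x y z l r X Y Z :: nat assumes "x \<noteq> y" "x \<noteq> z" "y \<noteq> z" "l \<le> x" "x \<le> r" "X + x = l + r" "\<not> (l \<le> y \<and> y \<le> r)" "Y = y" "l \<le> z" "z \<le> r" "Z + z = l + r"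
 shows "((X < Z \<and> Z < Y) \<or> (Y < Z \<and> Z < X)) \<longleftrightarrow> \<not> ((x < z \<and> z < y) \<or> (y < z \<and> z < x))"
  using assms by arith

lemma bc_ioo: fixes x y z l r X Y Z :: nat assumes "x \<noteq> y" "x \<noteq> z" "y \<noteq> z" "l \<le> x" "x \<le> r" "X + x = l + r" "\<not> (l \<le> y \<and> y \<le> r)" "Y = y" "\<not> (l \<le> z \<and> z \<le> r)" "Z = z"
 shows "((X < Z \<and> Z < Y) \<or> (Y < Z \<and> Z < X)) \<longleftrightarrow> ((x < z \<and> z < y) \<or> (y < z \<and> z < x))"
  using assms by arith

lemma bc_oii: fixes x y z l r X Y Z :: nat assumes "x \<noteq> y" "x \<noteq> z" "y \<noteq> z" "\<not> (l \<le> x \<and> x \<le> r)" "X = x" "l \<le> y" "y \<le> r" "Y + y = l + r" "l \<le> z" "z \<le> r" "Z + z = l + r"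
 shows "((X < Z \<and> Z < Y) \<or> (Y < Z \<and> Z < X)) \<longleftrightarrow> \<not> ((x < z \<and> z < y) \<or> (y < z \<and> z < x))"
  using assms by arith

lemma bc_oio: fixes x y z l r X Y Z :: nat assumes "x \<noteq> y" "x \<noteq> z" "y \<noteq> z" "\<not> (l \<le> x \<and> x \<le> r)" "X = x" "l \<le> y" "y \<le> r" "Y + y = l + r" "\<not> (l \<le> z \<and> z \<le> r)" "Z = z"
 shows "((X < Z \<and> Z < Y) \<or> (Y < Z \<and> Z < X)) \<longleftrightarrow> ((x < z \<and> z < y) \<or> (y < z \<and> z < x))"
  using assms by arith

lemma bc_ooi: fixes x y z l r X Y Z :: nat assumes "x \<noteq> y" "x \<noteq> z" "y \<noteq> z" "\<not> (l \<le> x \<and> x \<le> r)" "X = x" "\<not> (l \<le> y \<and> y \<le> r)" "Y = y" "l \<le> z" "z \<le> r" "Z + z = l + r"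
 shows "((X < Z \<and> Z < Y) \<or> (Y < Z \<and> Z < X)) \<longleftrightarrow> ((x < z \<and> z < y) \<or> (y < z \<and> z < x))"
  using assms by arith

lemma bc_ooo: fixes x y z l r X Y Z :: nat assumes "x \<noteq> y" "x \<noteq> z" "y \<noteq> z" "\<not> (l \<le> x \<and> x \<le> r)" "X = x" "\<not> (l \<le> y \<and> y \<le> r)" "Y = y" "\<not> (l \<le> z \<and> z \<le> r)" "Z = z"
 shows "((X < Z \<and> Z < Y) \<or> (Y < Z \<and> Z < X)) \<longleftrightarrow> ((x < z \<and> z < y) \<or> (y < z \<and> z < x))"
  using assms by arith

lemma betw_fr:
  assumes "x \<noteq> y" "x \<noteq> z" "y \<noteq> z" "l \<le> r"
  shows "betw (fr l r x) (fr l r y) (fr l r z) \<longleftrightarrow>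
    (betw x y z \<noteq> (((l \<le> x \<and> x \<le> r) \<noteq> (l \<le> y \<and> y \<le> r)) \<and> (l \<le> z \<and> z \<le> r)))"
proof -
  have fi: "l \<le> k \<Longrightarrow> k \<le> r \<Longrightarrow> fr l r k + k = l + r" for k unfolding fr_def by auto
  have fo: "\<not> (l \<le> k \<and> k \<le> r) \<Longrightarrow> fr l r k = k" for k unfolding fr_def by auto
  show ?thesis unfolding betw_def
  apply (cases "l \<le> x \<and> x \<le> r"; cases "l \<le> y \<and> y \<le> r"; cases "l \<le> z \<and> z \<le> r")
  subgoal using bc_iii[of x y z l r "fr l r x" "fr l r y" "fr l r z"] assms(1-3) fi[of x] fi[of y] fi[of z] by simp
  subgoal using bc_iio[of x y z l r "fr l r x" "fr l r y" "fr l r z"] assms(1-3) fi[of x] fi[of y] fo[of z] by simp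
  subgoal using bc_ioi[of x y z l r "fr l r x" "fr l r y" "fr l r z"] assms(1-3) fi[of x] fo[of y] fi[of z] by simp
  subgoal using bc_ioo[of x y z l r "fr l r x" "fr l r y" "fr l r z"] assms(1-3) fi[of x] fo[of y] fo[of z] by simp
  subgoal using bc_oii[of x y z l r "fr l r x" "fr l r y" "fr l r z"] assms(1-3) fo[of x] fi[of y] fi[of z] by simp
  subgoal using bc_oio[of x y z l r "fr l r x" "fr l r y" "fr l r z"] assms(1-3) fo[of x] fi[of y] fo[of z] by simp
  subgoal using bc_ooi[of x y z l r "fr l r x" "fr l r y" "fr l r z"] assms(1-3) fo[of x] fo[of y] fi[of z] by simp
  subgoal using bc_ooo[of x y z l r "fr l r x" "fr l r y" "fr l r z"] assms(1-3) fo[of x] fo[of y] fo[of z] by simp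
  done
qed

lemma ilv_fr:
  assumes "a1 \<noteq> a2" "b1 \<noteq> b2" "a1 \<noteq> b1" "a1 \<noteq> b2" "a2 \<noteq> b1" "a2 \<noteq> b2" "l \<le> r"
  shows "ilv (fr l r a1) (fr l r a2) (fr l r b1) (fr l r b2) \<longleftrightarrow>
    (ilv a1 a2 b1 b2 \<noteq> (((l \<le> a1 \<and> a1 \<le> r) \<noteq> (l \<le> a2 \<and> a2 \<le> r)) \<and>
                         ((l \<le> b1 \<and> b1 \<le> r) \<noteq> (l \<le> b2 \<and> b2 \<le> r))))"
  unfolding ilv_def using betw_fr[of a1 a2 b1 l r] betw_fr[of a1 a2 b2 l r] assms by auto


lemma par_fr:
  assumes "even l" "odd r" "l \<le> r"
  shows "(even (fr l r c1) \<longleftrightarrow> even (fr l r c2)) \<longleftrightarrow>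
    ((even c1 \<longleftrightarrow> even c2) \<noteq> ((l \<le> c1 \<and> c1 \<le> r) \<noteq> (l \<le> c2 \<and> c2 \<le> r)))"
proof -
  have *: "even (fr l r k) \<longleftrightarrow> (if l \<le> k \<and> k \<le> r then odd k else even k)" for k
    using assms unfolding fr_def by (auto; presburger)
  show ?thesis unfolding * by auto
qed




lemma pair_set_facts:
  assumes A: "{s. s < length xs \<and> xs!s = u} = {a1, a2}"
  shows "\<And>s. s < length xs \<Longrightarrow> xs!s = u \<Longrightarrow> s = a1 \<or> s = a2"
    "a1 < length xs" "xs ! a1 = u" "a2 < length xs" "xs ! a2 = u"
proof -
  have "a1 \<in> {s. s < length xs \<and> xs!s = u}" "a2 \<in> {s. s < length xs \<and> xs!s = u}" using A by auto
  then show "a1 < length xs" "xs ! a1 = u" "a2 < length xs" "xs ! a2 = u" by auto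
  fix s assume "s < length xs" "xs!s = u"
  then have "s \<in> {s. s < length xs \<and> xs!s = u}" by simp
  then show "s = a1 \<or> s = a2" using A by simp
qed

lemma interlace_ordered:
  assumes A: "{s. s < length xs \<and> xs!s = u} = {a1, a2}"
    and B: "{s. s < length xs \<and> xs!s = w} = {b1, b2}" and a: "a1 < a2" and b: "b1 < b2"
  shows "interlace_word xs u w \<longleftrightarrow> (a1 < b1 \<and> b1 < a2 \<and> a2 < b2)"
proof
  note PA = pair_set_facts[OF A] and PB = pair_set_facts[OF B]
  assume "interlace_word xs u w"
  then obtain i j k l where h: "i < j" "j < k" "k < l" "l < length xs"
    "xs ! i = u" "xs ! j = w" "xs ! k = u" "xs ! l = w"
    unfolding interlace_word_def by blast
  have "i = a1 \<or> i = a2" "k = a1 \<or> k = a2" using h PA(1)[of i] PA(1)[of k] by auto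
  then have ik: "i = a1" "k = a2" using h a by auto
  have "j = b1 \<or> j = b2" "l = b1 \<or> l = b2" using h PB(1)[of j] PB(1)[of l] by auto
  then have jl: "j = b1" "l = b2" using h b by auto
  show "a1 < b1 \<and> b1 < a2 \<and> a2 < b2" using h ik jl by simp
next
  note PA = pair_set_facts[OF A] and PB = pair_set_facts[OF B]
  assume o: "a1 < b1 \<and> b1 < a2 \<and> a2 < b2"
  show "interlace_word xs u w" unfolding interlace_word_def using o PA PB by blast
qed

lemma ilv_sym1: "ilv a1 a2 b1 b2 = ilv a2 a1 b1 b2" unfolding ilv_def betw_def by auto
lemma ilv_sym2: "ilv a1 a2 b1 b2 = ilv a1 a2 b2 b1" unfolding ilv_def betw_def by auto

lemma ilv_ordered:
  fixes a1 a2 b1 b2 :: nat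
  assumes "a1 < a2" "b1 < b2" "a1 \<noteq> b1" "a1 \<noteq> b2" "a2 \<noteq> b1" "a2 \<noteq> b2"
  shows "ilv a1 a2 b1 b2 \<longleftrightarrow> ((a1 < b1 \<and> b1 < a2 \<and> a2 < b2) \<or> (b1 < a1 \<and> a1 < b2 \<and> b2 < a2))"
  using assms unfolding ilv_def betw_def by auto

lemma H_adj_ordered:
  assumes A: "occ p u = {a1, a2}" and B: "occ p w = {b1, b2}" and a: "a1 < a2" and b: "b1 < b2"
    and uw: "u \<noteq> w"
  shows "H_adj p u w \<longleftrightarrow> ilv a1 a2 b1 b2"
proof -
  have A': "{s. s < length (vertex_seq p) \<and> vertex_seq p ! s = u} = {a1, a2}"
    and B': "{s. s < length (vertex_seq p) \<and> vertex_seq p ! s = w} = {b1, b2}"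
    using A B unfolding occ_def by auto
  have "vertex_seq p ! a1 = u" "vertex_seq p ! a2 = u" "vertex_seq p ! b1 = w" "vertex_seq p ! b2 = w"
    using pair_set_facts[OF A'] pair_set_facts[OF B'] by auto
  then have d: "a1 \<noteq> b1" "a1 \<noteq> b2" "a2 \<noteq> b1" "a2 \<noteq> b2" using uw by auto
  show ?thesis unfolding H_adj_def ilv_ordered[OF a b d]
    using interlace_ordered[OF A' B' a b] interlace_ordered[OF B' A' b a] uw by auto
qed

lemma H_adj_char:
  assumes A: "occ p u = {a1, a2}" and B: "occ p w = {b1, b2}" and a: "a1 \<noteq> a2" and b: "b1 \<noteq> b2"
    and uw: "u \<noteq> w"
  shows "H_adj p u w \<longleftrightarrow> ilv a1 a2 b1 b2"
proof -
  obtain a1' a2' where ia: "occ p u = {a1', a2'}" "a1' < a2'" "ilv a1 a2 b1 b2 = ilv a1' a2' b1 b2"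
  proof (cases "a1 < a2")
    case True then show ?thesis using that A by blast
  next
    case False then have "a2 < a1" using a by simp
    then show ?thesis using that[of a2 a1] A ilv_sym1 by (simp add: insert_commute)
  qed
  obtain b1' b2' where ib: "occ p w = {b1', b2'}" "b1' < b2'" "ilv a1' a2' b1 b2 = ilv a1' a2' b1' b2'"
  proof (cases "b1 < b2")
    case True then show ?thesis using that B by blast
  next
    case False then have "b2 < b1" using b by simp
    then show ?thesis using that[of b2 b1] B ilv_sym2 by (simp add: insert_commute)
  qed
  show ?thesis using H_adj_ordered[OF ia(1) ib(1) ia(2) ib(2) uw] ia(3) ib(3) by simp
qed

lemma oriented_char2:
  assumes A: "occ p v = {c1, c2}" and a: "c1 \<noteq> c2"
  shows "oriented p v \<longleftrightarrow> (even c1 \<longleftrightarrow> even c2)"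
proof (cases "c1 < c2")
  case True then show ?thesis using oriented_char[OF A] by simp
next
  case False
  then have "c2 < c1" using a by simp
  moreover have "occ p v = {c2, c1}" using A by auto
  ultimately show ?thesis using oriented_char[of p v c2 c1] by auto
qed




lemma sp_len: "signed_perm n p \<Longrightarrow> length p = n" unfolding signed_perm_def by simp

lemma sp_nz: "signed_perm n p \<Longrightarrow> k < length p \<Longrightarrow> p ! k \<noteq> 0"
  unfolding signed_perm_def by (metis nth_mem)

lemma sp_distinct: assumes "signed_perm n p" shows "distinct (map (\<lambda>x. nat \<bar>x\<bar>) p)"
proof -
  have "set (map (\<lambda>x. nat \<bar>x\<bar>) p) = {1..n}" using assms unfolding signed_perm_def by simp
  then have "card (set (map (\<lambda>x. nat \<bar>x\<bar>) p)) = length (map (\<lambda>x. nat \<bar>x\<bar>) p)"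
    using assms unfolding signed_perm_def by simp
  then show ?thesis by (rule card_distinct)
qed

lemma sp_inj: assumes "signed_perm n p" "k < n" "k' < n" "nat \<bar>p ! k\<bar> = nat \<bar>p ! k'\<bar>"
  shows "k = k'"
proof -
  have "map (\<lambda>x. nat \<bar>x\<bar>) p ! k = map (\<lambda>x. nat \<bar>x\<bar>) p ! k'" using assms sp_len by auto
  moreover have "distinct (map (\<lambda>x. nat \<bar>x\<bar>) p)" using sp_distinct[OF assms(1)] .
  ultimately show ?thesis using assms(2,3) sp_len[OF assms(1)] unfolding distinct_conv_nth
    by (metis length_map)
qed

lemma sp_range: assumes "signed_perm n p" "k < n" shows "1 \<le> nat \<bar>p ! k\<bar> \<and> nat \<bar>p ! k\<bar> \<le> n"
proof -
  have "p ! k \<in> set p" using assms sp_len by auto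
  then have "nat \<bar>p ! k\<bar> \<in> (\<lambda>x. nat \<bar>x\<bar>) ` set p" by blast
  then show ?thesis using assms unfolding signed_perm_def by auto
qed

lemma sp_ex: assumes "signed_perm n p" "1 \<le> a" "a \<le> n" shows "\<exists>k < n. nat \<bar>p ! k\<bar> = a"
proof -
  have "a \<in> (\<lambda>x. nat \<bar>x\<bar>) ` set p" using assms unfolding signed_perm_def by auto
  then obtain x where "x \<in> set p" "nat \<bar>x\<bar> = a" by auto
  then show ?thesis using sp_len[OF assms(1)] by (metis in_set_conv_nth)
qed

definition idx :: "int list \<Rightarrow> nat \<Rightarrow> nat" where
  "idx p a = (THE k. k < length p \<and> nat \<bar>p ! k\<bar> = a)"

lemma idx_prop: assumes "signed_perm n p" "1 \<le> a" "a \<le> n"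
  shows "idx p a < n" "nat \<bar>p ! idx p a\<bar> = a"
proof -
  obtain k where k: "k < n" "nat \<bar>p ! k\<bar> = a" using sp_ex[OF assms] by blast
  have "idx p a = k" unfolding idx_def
    using k sp_inj[OF assms(1)] sp_len[OF assms(1)] by (intro the_equality) auto
  then show "idx p a < n" "nat \<bar>p ! idx p a\<bar> = a" using k by auto
qed

lemma idx_uniq: assumes "signed_perm n p" "k < n" "nat \<bar>p ! k\<bar> = a" shows "k = idx p a"
proof -
  have "1 \<le> a" "a \<le> n" using sp_range[OF assms(1,2)] assms(3) by auto
  then show ?thesis using idx_prop[OF assms(1)] sp_inj[OF assms(1)] assms by metis
qed

definition posA :: "int list \<Rightarrow> nat \<Rightarrow> nat" where
  "posA p v = (if v = 0 then 2 * length p + 1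
     else if p ! idx p v > 0 then 2 * idx p v + 1 else 2 * idx p v)"
definition posB :: "int list \<Rightarrow> nat \<Rightarrow> nat" where
  "posB p v = (if v = length p then 2 * length p
     else if p ! idx p (v + 1) > 0 then 2 * idx p (v + 1) else 2 * idx p (v + 1) + 1)"

lemma vs_at: assumes "signed_perm n p" "k < n"
  shows "vertex_seq p ! (2 * k) = Lv (p ! k)" "vertex_seq p ! (2 * k + 1) = Rv (p ! k)"
  using vs_formula[of "2*k" p] vs_formula[of "2*k+1" p] assms sp_len[OF assms(1)]
  by (auto simp: nseg_def)

lemma vs_end: "vertex_seq p ! (2 * length p) = length p" "vertex_seq p ! (2 * length p + 1) = 0"
  using vs_formula[of "2 * length p" p] vs_formula[of "2 * length p + 1" p] by (auto simp: nseg_def)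

lemma occ_sp: assumes sp: "signed_perm n p" and v: "v \<le> n"
  shows "occ p v = {posA p v, posB p v}" "posA p v \<noteq> posB p v"
proof -
  have len: "length p = n" using sp_len[OF sp] .
  have N: "nseg p = 2 * n + 2" using len by (simp add: nseg_def)
  have pA: "posA p v < nseg p \<and> vertex_seq p ! posA p v = v"
  proof (cases "v = 0")
    case True then show ?thesis using vs_end[of p, unfolded len] len N by (simp add: posA_def)
  next
    case False
    then have k: "idx p v < n" "nat \<bar>p ! idx p v\<bar> = v" using idx_prop[OF sp, of v] v by auto
    show ?thesis
    proof (cases "p ! idx p v > 0")
      case True then show ?thesis using False k vs_at[OF sp k(1)] N by (simp add: posA_def Rv_def)
    next
      case F: False then show ?thesis using False k vs_at[OF sp k(1)] N by (simp add: posA_def Lv_def)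
    qed
  qed
  have pB: "posB p v < nseg p \<and> vertex_seq p ! posB p v = v"
  proof (cases "v = n")
    case True then show ?thesis using vs_end[of p, unfolded len] len N by (simp add: posB_def)
  next
    case False
    then have k: "idx p (v+1) < n" "nat \<bar>p ! idx p (v+1)\<bar> = v + 1" using idx_prop[OF sp, of "v+1"] v by auto
    show ?thesis
    proof (cases "p ! idx p (v+1) > 0")
      case True then show ?thesis using False k vs_at[OF sp k(1)] N len by (simp add: posB_def Lv_def)
    next
      case F: False then show ?thesis using False k vs_at[OF sp k(1)] N len by (simp add: posB_def Rv_def)
    qed
  qed
  have sub: "s = posA p v \<or> s = posB p v" if s: "s < nseg p" "vertex_seq p ! s = v" for s
  proof -
    consider "s = 2 * n + 1" | "s = 2 * n" | "s < 2 * n" using s N by linarith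
    then show ?thesis
    proof cases
      case 1 then show ?thesis using s vs_end[of p, unfolded len] len by (simp add: posA_def)
    next
      case 2 then show ?thesis using s vs_end[of p, unfolded len] len by (simp add: posB_def)
    next
      case 3
      define k where "k = s div 2"
      have kn: "k < n" using 3 k_def by simp
      have x0: "p ! k \<noteq> 0" using sp_nz[OF sp] kn len by simp
      have rng: "1 \<le> nat \<bar>p ! k\<bar> \<and> nat \<bar>p ! k\<bar> \<le> n" using sp_range[OF sp kn] .
      show ?thesis
      proof (cases "even s")
        case True
        then have sk: "s = 2 * k" using k_def by simp
        then have L: "Lv (p ! k) = v" using vs_at[OF sp kn] s by simp
        show ?thesis
        proof (cases "p ! k > 0")
          case True
          then have a: "nat \<bar>p ! k\<bar> = v + 1" using L rng by (simp add: Lv_def)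
          then have "v \<noteq> n" using rng by simp
          moreover have "k = idx p (v+1)" using idx_uniq[OF sp kn a] .
          ultimately show ?thesis using True sk len by (simp add: posB_def)
        next
          case False
          then have a: "nat \<bar>p ! k\<bar> = v" using L by (simp add: Lv_def)
          then have "v \<noteq> 0" using rng by simp
          moreover have "k = idx p v" using idx_uniq[OF sp kn a] .
          ultimately show ?thesis using False sk by (simp add: posA_def)
        qed
      next
        case False
        then have sk: "s = 2 * k + 1" using k_def by simp
        then have R: "Rv (p ! k) = v" using vs_at[OF sp kn] s by simp
        show ?thesis
        proof (cases "p ! k > 0")
          case True
          then have a: "nat \<bar>p ! k\<bar> = v" using R by (simp add: Rv_def)
          then have "v \<noteq> 0" using rng by simp
          moreover have "k = idx p v" using idx_uniq[OF sp kn a] .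
          ultimately show ?thesis using True sk by (simp add: posA_def)
        next
          case False
          then have a: "nat \<bar>p ! k\<bar> = v + 1" using R rng x0 by (simp add: Rv_def)
          then have "v \<noteq> n" using rng by simp
          moreover have "k = idx p (v+1)" using idx_uniq[OF sp kn a] .
          ultimately show ?thesis using False sk len by (simp add: posB_def)
        qed
      qed
    qed
  qed
  show "occ p v = {posA p v, posB p v}" unfolding occ_def using pA pB sub by auto
  show "posA p v \<noteq> posB p v"
  proof (cases "v = 0 \<or> v = n")
    case True
    then show ?thesis
    proof
      assume v0: "v = 0"
      show ?thesis
      proof (cases "v = n")
        case True then show ?thesis using v0 len by (simp add: posA_def posB_def)
      next
        case False
        then have "idx p (v+1) < n" using idx_prop[OF sp, of "v+1"] v by auto
        then show ?thesis using v0 False len by (auto simp: posA_def posB_def)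
      qed
    next
      assume vn: "v = n"
      show ?thesis
      proof (cases "v = 0")
        case True then show ?thesis using vn len by (simp add: posA_def posB_def)
      next
        case False
        then have "idx p v < n" using idx_prop[OF sp, of v] v by auto
        then show ?thesis using vn False len by (auto simp: posA_def posB_def)
      qed
    qed
  next
    case False
    then have a: "idx p v < n" "nat \<bar>p ! idx p v\<bar> = v"
      and b: "idx p (v+1) < n" "nat \<bar>p ! idx p (v+1)\<bar> = v + 1"
      using idx_prop[OF sp, of v] idx_prop[OF sp, of "v+1"] v by auto
    then have "idx p v \<noteq> idx p (v+1)" by auto
    then show ?thesis using False len by (auto simp: posA_def posB_def)
  qed
qed

lemma occ_pair: assumes "signed_perm n p" "v \<le> n" shows "\<exists>c1 c2. c1 \<noteq> c2 \<and> occ p v = {c1, c2}"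
  using occ_sp[OF assms] by blast




lemma rev_len[simp]: "i \<le> j \<Longrightarrow> j < length p \<Longrightarrow> length (reversal i j p) = length p"
  unfolding reversal_def by auto

lemma reversal_nth: assumes "i \<le> j" "j < length p" "m < length p"
  shows "reversal i j p ! m = (if m < i then p ! m else if m \<le> j then - (p ! (i + j - m)) else p ! m)"
  using assms unfolding reversal_def
  by (auto simp: nth_append rev_nth min_def; subgoal_tac "length p = Suc j"; simp)

lemma Lv_neg: "x \<noteq> 0 \<Longrightarrow> Lv (- x) = Rv x" and Rv_neg: "x \<noteq> 0 \<Longrightarrow> Rv (- x) = Lv x"
  unfolding Lv_def Rv_def by auto

lemma sp_rev: assumes sp: "signed_perm n p" and ij: "i \<le> j" "j < n"
  shows "signed_perm n (reversal i j p)"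
proof -
  define q where "q = reversal i j p"
  have len: "length p = n" using sp_len[OF sp] .
  have lq: "length q = n" using ij len q_def by simp
  have qn: "q ! m = (if m < i then p ! m else if m \<le> j then - (p ! (i + j - m)) else p ! m)" if "m < n" for m
    using reversal_nth[of i j p m] ij that len q_def by simp
  have z: "0 \<notin> set p" using sp unfolding signed_perm_def by simp
  have im: "(\<lambda>x. nat \<bar>x\<bar>) ` set p = {1..n}" using sp unfolding signed_perm_def by simp
  have A: "\<exists>y \<in> set p. x = y \<or> x = - y" if xq: "x \<in> set q" for x
  proof -
    obtain m where m: "m < n" "x = q ! m" using xq lq by (metis in_set_conv_nth)
    show ?thesis
    proof (cases "m < i \<or> j < m")
      case True
      then have "x = p ! m" using m qn[OF m(1)] by auto
      moreover have "p ! m \<in> set p" using m len by simp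
      ultimately show ?thesis by blast
    next
      case False
      then have "x = - (p ! (i + j - m))" using m qn[OF m(1)] by auto
      moreover have "i + j - m < n" using ij False by linarith
      then have "p ! (i + j - m) \<in> set p" using len by simp
      ultimately show ?thesis by blast
    qed
  qed
  have B: "\<exists>x \<in> set q. nat \<bar>x\<bar> = nat \<bar>y\<bar>" if yp: "y \<in> set p" for y
  proof -
    obtain m where m: "m < n" "y = p ! m" using yp len by (metis in_set_conv_nth)
    show ?thesis
    proof (cases "m < i \<or> j < m")
      case True
      then have "q ! m = y" using m qn[OF m(1)] by auto
      moreover have "q ! m \<in> set q" using m lq by simp
      ultimately show ?thesis by blast
    next
      case False
      define m' where "m' = i + j - m"
      have m': "m' < n" "\<not> m' < i" "m' \<le> j" "i + j - m' = m" using ij False m'_def by auto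
      then have "q ! m' = - y" using qn[OF m'(1)] m by simp
      moreover have "q ! m' \<in> set q" using m' lq by simp
      moreover have "nat \<bar>- y\<bar> = nat \<bar>y\<bar>" by simp
      ultimately show ?thesis by metis
    qed
  qed
  have "0 \<notin> set q"
  proof
    assume "0 \<in> set q"
    then obtain y where "y \<in> set p" "0 = y \<or> 0 = - y" using A by blast
    then show False using z by auto
  qed
  moreover have "(\<lambda>x. nat \<bar>x\<bar>) ` set q = (\<lambda>x. nat \<bar>x\<bar>) ` set p"
  proof (rule equalityI; rule subsetI)
    fix z assume "z \<in> (\<lambda>x. nat \<bar>x\<bar>) ` set q"
    then obtain x where x: "x \<in> set q" "z = nat \<bar>x\<bar>" by blast
    then obtain y where y: "y \<in> set p" "x = y \<or> x = - y" using A by blast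
    then have "z = nat \<bar>y\<bar>" using x by auto
    then show "z \<in> (\<lambda>x. nat \<bar>x\<bar>) ` set p" using y(1) by blast
  next
    fix z assume "z \<in> (\<lambda>x. nat \<bar>x\<bar>) ` set p"
    then obtain y where y: "y \<in> set p" "z = nat \<bar>y\<bar>" by blast
    then obtain x where x: "x \<in> set q" "nat \<bar>x\<bar> = nat \<bar>y\<bar>" using B by blast
    have "nat \<bar>x\<bar> \<in> (\<lambda>x. nat \<bar>x\<bar>) ` set q" using x(1) by (rule imageI)
    then show "z \<in> (\<lambda>x. nat \<bar>x\<bar>) ` set q" using y(2) x(2) by simp
  qed
  ultimately show ?thesis unfolding q_def[symmetric] signed_perm_def using lq im by simp
qed

lemma nseg_rev: "i \<le> j \<Longrightarrow> j < length p \<Longrightarrow> nseg (reversal i j p) = nseg p"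
  by (simp add: nseg_def)

lemma vs_rev: assumes sp: "signed_perm n p" and ij: "i \<le> j" "j < n" and s: "s < nseg p"
  shows "vertex_seq (reversal i j p) ! s = vertex_seq p ! (fr (2 * i) (2 * j + 1) s)"
proof -
  define q where "q = reversal i j p"
  have len: "length p = n" using sp_len[OF sp] .
  have spq: "signed_perm n q" using sp_rev[OF sp ij] q_def by simp
  have lq: "length q = n" using sp_len[OF spq] .
  have qn: "q ! m = (if m < i then p ! m else if m \<le> j then - (p ! (i + j - m)) else p ! m)" if "m < n" for m
    using reversal_nth[of i j p m] ij that len q_def by simp
  have cs: "s = 2 * n \<or> s = 2 * n + 1 \<or> (s div 2 < n \<and> s = 2 * (s div 2)) \<or> (s div 2 < n \<and> s = 2 * (s div 2) + 1)"
    using s len unfolding nseg_def by auto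
  consider "s = 2 * n" | "s = 2 * n + 1" | k where "k < n" "s = 2 * k" | k where "k < n" "s = 2 * k + 1"
    using cs by blast
  then show ?thesis
  proof cases
    case 1
    then have "fr (2 * i) (2 * j + 1) s = s" using ij unfolding fr_def by auto
    then show ?thesis using 1 vs_end[of p] vs_end[of q] len lq q_def by simp
  next
    case 2
    then have "fr (2 * i) (2 * j + 1) s = s" using ij unfolding fr_def by auto
    then show ?thesis using 2 vs_end[of p] vs_end[of q] len lq q_def by simp
  next
    case (3 k)
    show ?thesis
    proof (cases "i \<le> k \<and> k \<le> j")
      case True
      have f: "fr (2 * i) (2 * j + 1) s = 2 * (i + j - k) + 1" using True 3 unfolding fr_def by auto
      have ijk: "i + j - k < n" using True ij by linarith
      then have nz: "p ! (i + j - k) \<noteq> 0" using sp_nz[OF sp, of "i + j - k"] len by simp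
      have "vertex_seq q ! s = Lv (q ! k)" using vs_at[OF spq 3(1)] 3 by simp
      also have "\<dots> = Rv (p ! (i + j - k))" using qn[OF 3(1)] True nz Lv_neg by simp
      also have "\<dots> = vertex_seq p ! (2 * (i + j - k) + 1)" using vs_at[OF sp ijk] by simp
      finally show ?thesis using f q_def by simp
    next
      case False
      have f: "fr (2 * i) (2 * j + 1) s = s" using False 3 unfolding fr_def by auto
      have "vertex_seq q ! s = Lv (q ! k)" using vs_at[OF spq 3(1)] 3 by simp
      also have "\<dots> = Lv (p ! k)" using qn[OF 3(1)] False by auto
      also have "\<dots> = vertex_seq p ! s" using vs_at[OF sp 3(1)] 3 by simp
      finally show ?thesis using f q_def by simp
    qed
  next
    case (4 k)
    show ?thesis
    proof (cases "i \<le> k \<and> k \<le> j")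
      case True
      have f: "fr (2 * i) (2 * j + 1) s = 2 * (i + j - k)" using True 4 unfolding fr_def by auto
      have ijk: "i + j - k < n" using True ij by linarith
      then have nz: "p ! (i + j - k) \<noteq> 0" using sp_nz[OF sp, of "i + j - k"] len by simp
      have "vertex_seq q ! s = Rv (q ! k)" using vs_at[OF spq 4(1)] 4 by simp
      also have "\<dots> = Lv (p ! (i + j - k))" using qn[OF 4(1)] True nz Rv_neg by simp
      also have "\<dots> = vertex_seq p ! (2 * (i + j - k))" using vs_at[OF sp ijk] by simp
      finally show ?thesis using f q_def by simp
    next
      case False
      have f: "fr (2 * i) (2 * j + 1) s = s" using False 4 unfolding fr_def by auto
      have "vertex_seq q ! s = Rv (q ! k)" using vs_at[OF spq 4(1)] 4 by simp
      also have "\<dots> = Rv (p ! k)" using qn[OF 4(1)] False by auto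
      also have "\<dots> = vertex_seq p ! s" using vs_at[OF sp 4(1)] 4 by simp
      finally show ?thesis using f q_def by simp
    qed
  qed
qed

lemma fr_invol: "l \<le> r \<Longrightarrow> fr l r (fr l r s) = s" unfolding fr_def by auto
lemma fr_lt: "r < N \<Longrightarrow> s < N \<Longrightarrow> fr l r s < (N::nat)" unfolding fr_def by auto

lemma occ_rev: assumes sp: "signed_perm n p" and ij: "i \<le> j" "j < n"
  shows "occ (reversal i j p) v = fr (2 * i) (2 * j + 1) ` occ p v"
proof -
  have len: "length p = n" using sp_len[OF sp] .
  have N: "nseg (reversal i j p) = nseg p" using nseg_rev ij len by simp
  have r: "2 * j + 1 < nseg p" using ij len by (simp add: nseg_def)
  have le: "2 * i \<le> 2 * j + 1" using ij by simp
  show ?thesis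
  proof (rule equalityI; rule subsetI)
    fix s assume "s \<in> occ (reversal i j p) v"
    then have s: "s < nseg p" "vertex_seq (reversal i j p) ! s = v" unfolding occ_def using N by auto
    then have "fr (2 * i) (2 * j + 1) s \<in> occ p v" unfolding occ_def
      using vs_rev[OF sp ij s(1)] fr_lt[OF r s(1)] by simp
    moreover have "s = fr (2 * i) (2 * j + 1) (fr (2 * i) (2 * j + 1) s)" using fr_invol[OF le] by simp
    ultimately show "s \<in> fr (2 * i) (2 * j + 1) ` occ p v" by (rule rev_image_eqI)
  next
    fix s assume "s \<in> fr (2 * i) (2 * j + 1) ` occ p v"
    then obtain t where t: "t \<in> occ p v" "s = fr (2 * i) (2 * j + 1) t" by auto
    then have tt: "t < nseg p" "vertex_seq p ! t = v" unfolding occ_def by auto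
    have sl: "s < nseg p" using fr_lt[OF r tt(1)] t by simp
    have "fr (2 * i) (2 * j + 1) s = t" using t fr_invol[OF le, of t] by simp
    then show "s \<in> occ (reversal i j p) v" unfolding occ_def using vs_rev[OF sp ij sl] sl tt N by simp
  qed
qed




definition xv :: "int list \<Rightarrow> nat \<Rightarrow> nat \<Rightarrow> nat \<Rightarrow> bit" where
  "xv p i j v = (if odd (card (occ p v \<inter> {2 * i..2 * j + 1})) then 1 else 0)"

lemma card_pair_odd: assumes "c1 \<noteq> c2"
  shows "odd (card ({c1, c2} \<inter> {l..r})) \<longleftrightarrow> ((l \<le> c1 \<and> c1 \<le> r) \<noteq> (l \<le> c2 \<and> c2 \<le> r))"
proof (cases "l \<le> c1 \<and> c1 \<le> r"; cases "l \<le> c2 \<and> c2 \<le> r")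
  assume "l \<le> c1 \<and> c1 \<le> r" "l \<le> c2 \<and> c2 \<le> r"
  then have "{c1, c2} \<inter> {l..r} = {c1, c2}" by auto
  then show ?thesis using assms \<open>l \<le> c1 \<and> c1 \<le> r\<close> \<open>l \<le> c2 \<and> c2 \<le> r\<close> by simp
next
  assume "l \<le> c1 \<and> c1 \<le> r" "\<not> (l \<le> c2 \<and> c2 \<le> r)"
  then have "{c1, c2} \<inter> {l..r} = {c1}" by auto
  then show ?thesis using \<open>l \<le> c1 \<and> c1 \<le> r\<close> \<open>\<not> (l \<le> c2 \<and> c2 \<le> r)\<close> by simp
next
  assume "\<not> (l \<le> c1 \<and> c1 \<le> r)" "l \<le> c2 \<and> c2 \<le> r"
  then have "{c1, c2} \<inter> {l..r} = {c2}" by auto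
  then show ?thesis using \<open>\<not> (l \<le> c1 \<and> c1 \<le> r)\<close> \<open>l \<le> c2 \<and> c2 \<le> r\<close> by simp
next
  assume "\<not> (l \<le> c1 \<and> c1 \<le> r)" "\<not> (l \<le> c2 \<and> c2 \<le> r)"
  then have "{c1, c2} \<inter> {l..r} = {}" by auto
  then show ?thesis using \<open>\<not> (l \<le> c1 \<and> c1 \<le> r)\<close> \<open>\<not> (l \<le> c2 \<and> c2 \<le> r)\<close> by simp
qed

lemma bit_xor: "(if P then (1::bit) else 0) = (if P \<noteq> X then 1 else 0) + (if X then 1 else 0) * (if X then 1 else 0)"
  by (cases P; cases X) simp_all

lemma bit_xor2: "(if P then (1::bit) else 0) = (if P \<noteq> (X \<and> Y) then 1 else 0) + (if X then 1 else 0) * (if Y then 1 else 0)"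
  by (cases P; cases X; cases Y) simp_all

lemma adj_step:
  assumes sp: "signed_perm n p" and ij: "i \<le> j" "j < n"
  shows "adj_matrix p = adj_matrix (reversal i j p) + mat (Suc n) (Suc n) (\<lambda>(u, w). xv p i j u * xv p i j w)"
proof -
  define q where "q = reversal i j p"
  define f where "f = fr (2 * i) (2 * j + 1)"
  define inI where "inI k \<longleftrightarrow> 2 * i \<le> k \<and> k \<le> 2 * j + 1" for k
  have len: "length p = n" using sp_len[OF sp] .
  have spq: "signed_perm n q" using sp_rev[OF sp ij] q_def by simp
  have lq: "length q = n" using sp_len[OF spq] .
  have le: "2 * i \<le> 2 * j + 1" using ij by simp
  have finj: "f a \<noteq> f b" if "a \<noteq> b" for a b using fr_invol[OF le] that unfolding f_def by metis
  have data: "\<exists>c1 c2. c1 \<noteq> c2 \<and> occ p u = {c1, c2} \<and> occ q u = {f c1, f c2} \<and> f c1 \<noteq> f c2 \<and>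
      xv p i j u = (if inI c1 \<noteq> inI c2 then 1 else 0)" if un: "u \<le> n" for u
  proof -
    obtain c1 c2 where c: "c1 \<noteq> c2" "occ p u = {c1, c2}" using occ_pair[OF sp un] by blast
    have "occ q u = {f c1, f c2}" using occ_rev[OF sp ij, of u] c q_def f_def by simp
    moreover have "xv p i j u = (if inI c1 \<noteq> inI c2 then 1 else 0)"
      unfolding xv_def c(2) card_pair_odd[OF c(1)] inI_def by simp
    ultimately show ?thesis using c finj by blast
  qed
  show ?thesis
  proof (rule eq_matI)
    show "dim_row (adj_matrix p) = dim_row (adj_matrix (reversal i j p) + mat (Suc n) (Suc n) (\<lambda>(u, w). xv p i j u * xv p i j w))"
      using len lq q_def by (simp add: adj_matrix_def)
    show "dim_col (adj_matrix p) = dim_col (adj_matrix (reversal i j p) + mat (Suc n) (Suc n) (\<lambda>(u, w). xv p i j u * xv p i j w))"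
      using len lq q_def by (simp add: adj_matrix_def)
    fix u w assume u: "u < dim_row (adj_matrix (reversal i j p) + mat (Suc n) (Suc n) (\<lambda>(u, w). xv p i j u * xv p i j w))"
      and w: "w < dim_col (adj_matrix (reversal i j p) + mat (Suc n) (Suc n) (\<lambda>(u, w). xv p i j u * xv p i j w))"
    then have un: "u < Suc n" and wn: "w < Suc n" by auto
    obtain c1 c2 where c: "c1 \<noteq> c2" "occ p u = {c1, c2}" "occ q u = {f c1, f c2}" "f c1 \<noteq> f c2"
        "xv p i j u = (if inI c1 \<noteq> inI c2 then 1 else 0)" using data[of u] un by auto
    obtain d1 d2 where d: "d1 \<noteq> d2" "occ p w = {d1, d2}" "occ q w = {f d1, f d2}" "f d1 \<noteq> f d2"
        "xv p i j w = (if inI d1 \<noteq> inI d2 then 1 else 0)" using data[of w] wn by auto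
    have ep: "adj_matrix p $$ (u, w) = (if u = w then (if oriented p u then 1 else 0) else (if H_adj p u w then 1 else 0))"
      using un wn len by (simp add: adj_matrix_def)
    have eq: "adj_matrix q $$ (u, w) = (if u = w then (if oriented q u then 1 else 0) else (if H_adj q u w then 1 else 0))"
      using un wn lq by (simp add: adj_matrix_def)
    have er: "(adj_matrix q + mat (Suc n) (Suc n) (\<lambda>(u, w). xv p i j u * xv p i j w)) $$ (u, w)
        = adj_matrix q $$ (u, w) + xv p i j u * xv p i j w"
      using un wn lq by (simp add: adj_matrix_def)
    have main: "adj_matrix p $$ (u, w) = adj_matrix q $$ (u, w) + xv p i j u * xv p i j w"
    proof (cases "u = w")
      case True
      have op: "oriented p u \<longleftrightarrow> (even c1 \<longleftrightarrow> even c2)" using oriented_char2[OF c(2) c(1)] .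
      have oq: "oriented q u \<longleftrightarrow> (even (f c1) \<longleftrightarrow> even (f c2))" using oriented_char2[OF c(3) c(4)] .
      have par: "(even (f c1) \<longleftrightarrow> even (f c2)) \<longleftrightarrow> ((even c1 \<longleftrightarrow> even c2) \<noteq> (inI c1 \<noteq> inI c2))"
        unfolding f_def inI_def by (rule par_fr) (use ij in auto)
      have a1: "adj_matrix p $$ (u, u) = (if (even c1 \<longleftrightarrow> even c2) then 1 else 0)" using ep True op by simp
      have a2: "adj_matrix q $$ (u, u) = (if ((even c1 \<longleftrightarrow> even c2) \<noteq> (inI c1 \<noteq> inI c2)) then 1 else 0)"
        using eq True oq par by simp
      show ?thesis unfolding a1 a2 True[symmetric] c(5)
        by (cases "even c1 \<longleftrightarrow> even c2"; cases "inI c1 \<noteq> inI c2") simp_all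
    next
      case False
      have vp: "vertex_seq p ! c1 = u" "vertex_seq p ! c2 = u" "vertex_seq p ! d1 = w" "vertex_seq p ! d2 = w"
        using c(2) d(2) unfolding occ_def by (auto simp: set_eq_iff)
      then have dist: "c1 \<noteq> d1" "c1 \<noteq> d2" "c2 \<noteq> d1" "c2 \<noteq> d2" using False by auto
      have hp: "H_adj p u w \<longleftrightarrow> ilv c1 c2 d1 d2" using H_adj_char[OF c(2) d(2) c(1) d(1) False] .
      have hq: "H_adj q u w \<longleftrightarrow> ilv (f c1) (f c2) (f d1) (f d2)" using H_adj_char[OF c(3) d(3) c(4) d(4) False] .
      have il: "ilv (f c1) (f c2) (f d1) (f d2) \<longleftrightarrow> (ilv c1 c2 d1 d2 \<noteq> ((inI c1 \<noteq> inI c2) \<and> (inI d1 \<noteq> inI d2)))"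
        unfolding f_def inI_def using ilv_fr[OF c(1) d(1) dist le] .
      have a1: "adj_matrix p $$ (u, w) = (if ilv c1 c2 d1 d2 then 1 else 0)" using ep False hp by simp
      have a2: "adj_matrix q $$ (u, w) = (if ilv c1 c2 d1 d2 \<noteq> ((inI c1 \<noteq> inI c2) \<and> (inI d1 \<noteq> inI d2)) then 1 else 0)"
        using eq False hq il by simp
      show ?thesis unfolding a1 a2 c(5) d(5)
        by (cases "ilv c1 c2 d1 d2"; cases "inI c1 \<noteq> inI c2"; cases "inI d1 \<noteq> inI d2") simp_all
    qed
    show "adj_matrix p $$ (u, w) = (adj_matrix (reversal i j p) + mat (Suc n) (Suc n) (\<lambda>(u, w). xv p i j u * xv p i j w)) $$ (u, w)"
      using main er q_def by simp
  qed
qed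

lemma adj_carrier: "adj_matrix p \<in> carrier_mat (Suc (length p)) (Suc (length p))"
  by (simp add: adj_matrix_def)

lemma rank_step:
  assumes sp: "signed_perm n p" and ij: "i \<le> j" "j < n"
  shows "rank_GF2 (Suc n) (adj_matrix p) \<le> rank_GF2 (Suc n) (adj_matrix (reversal i j p)) + 1"
proof -
  define q where "q = reversal i j p"
  define M where "M = (mat (Suc n) (Suc n) (\<lambda>(u, w). xv p i j u * xv p i j w) :: bit mat)"
  have len: "length p = n" using sp_len[OF sp] .
  have lq: "length q = n" using sp_len[OF sp_rev[OF sp ij]] q_def by simp
  have Aq: "adj_matrix q \<in> carrier_mat (Suc n) (Suc n)" using adj_carrier[of q] lq by simp
  have Mc: "M \<in> carrier_mat (Suc n) (Suc n)" unfolding M_def by simp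
  have "adj_matrix p = adj_matrix q + M" using adj_step[OF sp ij] q_def M_def by simp
  then have "rank_GF2 (Suc n) (adj_matrix p) \<le> rank_GF2 (Suc n) (adj_matrix q) + rank_GF2 (Suc n) M"
    unfolding rank_GF2_def using vec_space.rank_subadditive[OF Aq Mc] by simp
  moreover have "rank_GF2 (Suc n) M \<le> 1"
    unfolding rank_GF2_def
    by (rule vec_space.rank_le_1_product_entries[OF Mc, of "xv p i j" "xv p i j"]) (auto simp: M_def)
  ultimately show ?thesis using q_def by simp
qed




lemma id_nth: "k < n \<Longrightarrow> identity_sp n ! k = int (k + 1)"
  unfolding identity_sp_def using nth_map[of k "[1..<Suc n]" int] by (simp del: upt_Suc)

lemma id_len[simp]: "length (identity_sp n) = n" unfolding identity_sp_def by simp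

lemma sp_id: "signed_perm n (identity_sp n)"
proof -
  have s: "set (identity_sp n) = int ` {1..n}" unfolding identity_sp_def
    by (auto simp: image_iff)
  have "(\<lambda>x. nat \<bar>x\<bar>) ` int ` {1..n} = {1..n}" by (force simp: image_iff)
  then show ?thesis unfolding signed_perm_def s by auto
qed

lemma id_occ: assumes "v \<le> n"
  shows "occ (identity_sp n) v = {if v = 0 then 2 * n + 1 else 2 * v - 1, 2 * v}"
    "(if v = 0 then 2 * n + 1 else 2 * v - 1) \<noteq> 2 * v"
proof -
  define p where "p = identity_sp n"
  have sp: "signed_perm n p" using sp_id p_def by simp
  have len: "length p = n" using p_def by simp
  have idx1: "idx p a = a - 1" if "1 \<le> a" "a \<le> n" for a
  proof -
    have "p ! (a - 1) = int a" using id_nth[of "a - 1" n] that p_def by simp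
    then show ?thesis using idx_uniq[OF sp, of "a - 1" a] that by simp
  qed
  have pa: "posA p v = (if v = 0 then 2 * n + 1 else 2 * v - 1)"
  proof (cases "v = 0")
    case True then show ?thesis using len by (simp add: posA_def)
  next
    case False
    then have "p ! idx p v = int v" using idx1[of v] assms id_nth[of "v - 1" n] p_def by simp
    then show ?thesis using False idx1[of v] assms by (simp add: posA_def)
  qed
  have pb: "posB p v = 2 * v"
  proof (cases "v = n")
    case True then show ?thesis using len by (simp add: posB_def)
  next
    case False
    then have "p ! idx p (v + 1) = int (v + 1)" using idx1[of "v + 1"] assms id_nth[of v n] p_def by simp
    then show ?thesis using False idx1[of "v + 1"] assms len by (simp add: posB_def)
  qed
  show "occ (identity_sp n) v = {if v = 0 then 2 * n + 1 else 2 * v - 1, 2 * v}"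
    using occ_sp(1)[OF sp assms] pa pb p_def by simp
  show "(if v = 0 then 2 * n + 1 else 2 * v - 1) \<noteq> 2 * v" by auto
qed

lemma adj_id: "adj_matrix (identity_sp n) = 0\<^sub>m (Suc n) (Suc n)"
proof (rule eq_matI)
  show "dim_row (adj_matrix (identity_sp n)) = dim_row (0\<^sub>m (Suc n) (Suc n) :: bit mat)"
    by (simp add: adj_matrix_def)
  show "dim_col (adj_matrix (identity_sp n)) = dim_col (0\<^sub>m (Suc n) (Suc n) :: bit mat)"
    by (simp add: adj_matrix_def)
  fix u w assume "u < dim_row (0\<^sub>m (Suc n) (Suc n) :: bit mat)" "w < dim_col (0\<^sub>m (Suc n) (Suc n) :: bit mat)"
  then have un: "u \<le> n" and wn: "w \<le> n" by auto
  define a where "a v = (if v = 0 then 2 * n + 1 else 2 * v - 1)" for v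
  have ou: "occ (identity_sp n) u = {a u, 2 * u}" "a u \<noteq> 2 * u" using id_occ[OF un] a_def by auto
  have ow: "occ (identity_sp n) w = {a w, 2 * w}" "a w \<noteq> 2 * w" using id_occ[OF wn] a_def by auto
  have e: "adj_matrix (identity_sp n) $$ (u, w) = (if u = w then (if oriented (identity_sp n) u then 1 else 0)
     else (if H_adj (identity_sp n) u w then 1 else 0))"
    using un wn by (simp add: adj_matrix_def)
  show "adj_matrix (identity_sp n) $$ (u, w) = 0\<^sub>m (Suc n) (Suc n) $$ (u, w)"
  proof (cases "u = w")
    case True
    have "\<not> oriented (identity_sp n) u" using oriented_char2[OF ou(1) ou(2)] unfolding a_def by auto
    then show ?thesis using e True un by simp
  next
    case False
    have "\<not> ilv (a u) (2 * u) (a w) (2 * w)"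
      using False un wn unfolding a_def ilv_def betw_def by auto
    then have "\<not> H_adj (identity_sp n) u w" using H_adj_char[OF ou(1) ow(1) ou(2) ow(2) False] by simp
    then show ?thesis using e False un wn by simp
  qed
qed

lemma rank_id: "rank_GF2 (Suc n) (adj_matrix (identity_sp n)) = 0"
  unfolding adj_id rank_GF2_def by (rule vec_space.rank_0I)

lemma rank_le_steps:
  "(is_reversal_step ^^ k) p (identity_sp (length p)) \<Longrightarrow> signed_perm n p \<Longrightarrow>
   rank_GF2 (Suc n) (adj_matrix p) \<le> k"
proof (induction k arbitrary: p)
  case 0
  then have "p = identity_sp n" using sp_len by auto
  then show ?case using rank_id by simp
next
  case (Suc k)
  obtain q where st: "is_reversal_step p q" and r: "(is_reversal_step ^^ k) q (identity_sp (length p))"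
    using relpowp_Suc_D2[OF Suc.prems(1)] by blast
  obtain i j where ij: "i \<le> j" "j < length p" "q = reversal i j p"
    using st unfolding is_reversal_step_def by blast
  have len: "length p = n" using sp_len[OF Suc.prems(2)] .
  have spq: "signed_perm n q" using sp_rev[OF Suc.prems(2)] ij len by simp
  have "length q = length p" using ij by simp
  then have "rank_GF2 (Suc n) (adj_matrix q) \<le> k" using Suc.IH[of q] r spq by simp
  moreover have "rank_GF2 (Suc n) (adj_matrix p) \<le> rank_GF2 (Suc n) (adj_matrix q) + 1"
    using rank_step[OF Suc.prems(2), of i j] ij len by simp
  ultimately show ?case by simp
qed

lemma sort_ex:
  assumes "signed_perm n p" "m \<le> n" "\<forall>t<m. p ! t = int (t + 1)"
  shows "\<exists>k. (is_reversal_step ^^ k) p (identity_sp n)"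
  using assms
proof (induction "n - m" arbitrary: m p rule: less_induct)
  case less
  note sp = less.prems(1)
  have len: "length p = n" using sp_len[OF sp] .
  show ?case
  proof (cases "m = n")
    case True
    have "p = identity_sp n"
      by (rule nth_equalityI) (use len less.prems(3) True id_nth in auto)
    then have "(is_reversal_step ^^ 0) p (identity_sp n)" by simp
    then show ?thesis by blast
  next
    case False
    then have mn: "m < n" using less.prems(2) by simp
    obtain t where t: "t < n" "nat \<bar>p ! t\<bar> = m + 1" using sp_ex[OF sp, of "m + 1"] mn by auto
    have mt: "m \<le> t"
    proof (rule ccontr)
      assume "\<not> m \<le> t"
      then have "p ! t = int (t + 1)" using less.prems(3) by simp
      then show False using t \<open>\<not> m \<le> t\<close> by simp
    qed
    define q where "q = reversal m t p"
    have stq: "is_reversal_step p q" unfolding is_reversal_step_def q_def using mt t len by blast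
    have spq: "signed_perm n q" using sp_rev[OF sp mt t(1)] q_def by simp
    have qm: "q ! m = - (p ! t)" using reversal_nth[of m t p m] mt t len mn q_def by simp
    have qpre: "\<forall>t'<m. q ! t' = int (t' + 1)" using reversal_nth[of m t p] mt t len less.prems(3) q_def by auto
    have nq: "nat \<bar>q ! m\<bar> = m + 1" using qm t by simp
    show ?thesis
    proof (cases "q ! m > 0")
      case True
      then have "q ! m = int (m + 1)" using nq by simp
      then have pre: "\<forall>t'<m + 1. q ! t' = int (t' + 1)" using qpre by (auto simp: less_Suc_eq)
      have d: "n - (m + 1) < n - m" "m + 1 \<le> n" using mn by auto
      have "\<exists>k. (is_reversal_step ^^ k) q (identity_sp n)"
        using less.hyps[of "m + 1" q] d spq pre by blast
      then obtain k where "(is_reversal_step ^^ k) q (identity_sp n)" by blast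
      then have "(is_reversal_step ^^ Suc k) p (identity_sp n)" using stq by (rule relpowp_Suc_I2[rotated])
      then show ?thesis by blast
    next
      case False
      then have qm': "q ! m = - int (m + 1)" using nq by simp
      define q' where "q' = reversal m m q"
      have lq: "length q = n" using sp_len[OF spq] .
      have stq': "is_reversal_step q q'" unfolding is_reversal_step_def q'_def using mn lq by blast
      have spq': "signed_perm n q'" using sp_rev[OF spq, of m m] mn q'_def by simp
      have "q' ! m = int (m + 1)" using reversal_nth[of m m q m] mn lq qm' q'_def by simp
      moreover have "\<forall>t'<m. q' ! t' = int (t' + 1)" using reversal_nth[of m m q] mn lq qpre q'_def by auto
      ultimately have pre: "\<forall>t'<m + 1. q' ! t' = int (t' + 1)" by (auto simp: less_Suc_eq)
      have d: "n - (m + 1) < n - m" "m + 1 \<le> n" using mn by auto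
      have "\<exists>k. (is_reversal_step ^^ k) q' (identity_sp n)"
        using less.hyps[of "m + 1" q'] d spq' pre by blast
      then obtain k where "(is_reversal_step ^^ k) q' (identity_sp n)" by blast
      then have "(is_reversal_step ^^ Suc k) q (identity_sp n)" using stq' by (rule relpowp_Suc_I2[rotated])
      then have "(is_reversal_step ^^ Suc (Suc k)) p (identity_sp n)" using stq by (rule relpowp_Suc_I2[rotated])
      then show ?thesis by blast
    qed
  qed
qed

theorem mainTheorem2:
  fixes n :: nat and p :: "int list"
  assumes "signed_perm n p"
  shows "reversal_distance p \<ge> rank_GF2 (Suc n) (adj_matrix p)"
proof -
  have len: "length p = n" using sp_len[OF assms] .
  have ex: "\<exists>k. (is_reversal_step ^^ k) p (identity_sp (length p))"
    using sort_ex[OF assms, of 0] len by simp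
  have "(is_reversal_step ^^ reversal_distance p) p (identity_sp (length p))"
    unfolding reversal_distance_def by (rule LeastI_ex[OF ex])
  then show ?thesis using rank_le_steps assms by blast
qed


end
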